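(* Let $\Omega$ and $Y$ be proper subdomains of $\mathbb{C}$, let $s\in Y$, and suppose $\mathscr{C}_{\Omega}^{Y,s}(z)>0$ for all $z\in\Omega$. Then $\eta_\Omega(w)\geq \mathscr{C}_{\Omega}^{Y,s}(w)$ for every $w\in\Omega$.
   Context: $\mathbb{D}=\{z\in\mathbb{C}:|z|<1\}$. For domains $\Omega\subset\mathbb{C}$, $Y\subsetneq\mathbb{C}$, and points $w\in\Omega$, $s\in Y$, let $\mathcal{H}^s_w(\Omega,Y)$ be the set of holomorphic maps $h:\Omega\to Y$ with $h(w)=s$ and $h(z)\neq s$ for all $z\in\Omega\setminus\{w\}$. For a domain $Y\subsetneq\mathbb{C}$ and $v\in Y$, the Hurwitz density is $\eta_Y(v)=2/r_Y(v)$, where $r_Y(v)=\max\{h'(0): h:\mathbb{D}\to Y \text{ holomorphic},\ h(0)=v,\ h(z)\neq v \text{ for } z\in\mathbb{D}\setminus\{0\},\ h'(0)>0\}$. The Carathéodory density of the Hurwitz metric of $\Omega$ relative to $Y$ is $\mathscr{C}_{\Omega}^{Y,s}(w)=\sup\{\eta_Y(h(w))|h'(w)| : h\in\mathcal{H}^s_w(\Omega,Y)\}$ (defined to be $0$ if the family is empty). *)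

theory Defs
  imports "HOL-Complex_Analysis.Complex_Analysis"
begin

definition domain :: "complex set \<Rightarrow> bool" where
  "domain S \<longleftrightarrow> open S \<and> connected S \<and> S \<noteq> {}"

definition hurwitz_family :: "complex set \<Rightarrow> complex set \<Rightarrow> complex \<Rightarrow> complex \<Rightarrow> (complex \<Rightarrow> complex) set" where
  "hurwitz_family \<Omega> Y w s =
     {h. h holomorphic_on \<Omega> \<and> h ` \<Omega> \<subseteq> Y \<and> h w = s \<and> (\<forall>z\<in>\<Omega> - {w}. h z \<noteq> s)}"

definition hurwitz_radius :: "complex set \<Rightarrow> complex \<Rightarrow> real" where
  "hurwitz_radius Y v =
     Sup {Re (deriv h 0) | h. h \<in> hurwitz_family (ball 0 1) Y 0 v
                              \<and> Im (deriv h 0) = 0 \<and> Re (deriv h 0) > 0}"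

definition hurwitz_density :: "complex set \<Rightarrow> complex \<Rightarrow> real" where
  "hurwitz_density Y v = 2 / hurwitz_radius Y v"

definition caratheodory_hurwitz :: "complex set \<Rightarrow> complex set \<Rightarrow> complex \<Rightarrow> complex \<Rightarrow> real" where
  "caratheodory_hurwitz \<Omega> Y s w =
     (if hurwitz_family \<Omega> Y w s = {} then 0
      else Sup {hurwitz_density Y (h w) * norm (deriv h w) | h. h \<in> hurwitz_family \<Omega> Y w s})"

end

theory Submission
  imports Defs
begin

lemma hol_deriv_at:
  assumes "f holomorphic_on S" "open S" "z \<in> S"
  shows "(f has_field_derivative deriv f z) (at z)"
  using assms holomorphic_derivI by blast

lemma hurwitz_deriv_bound:
  assumes pY: "p \<notin> Y" and vY: "v \<in> Y"
  shows "\<exists>B. \<forall>f \<in> hurwitz_family (ball 0 1) Y 0 v. norm (deriv f 0) \<le> B"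
proof -
  obtain R where Rpos: "\<And>z. 0 < R z"
    and RL: "\<And>f. \<lbrakk>f holomorphic_on cball 0 (R(f 0));
                 \<And>z. norm z \<le> R(f 0) \<Longrightarrow> f z \<noteq> 0 \<and> f z \<noteq> 1\<rbrakk> \<Longrightarrow> norm(deriv f 0) < 1"
    using Landau_Picard by metis
  define R0 where "R0 = R (-1)"
  have R0: "R0 > 0" using Rpos R0_def by auto
  have pv: "p \<noteq> v" using pY vY by auto
  show ?thesis
  proof (intro exI ballI)
    fix f assume "f \<in> hurwitz_family (ball 0 1) Y 0 v"
    then have holf: "f holomorphic_on ball 0 1" and fY: "f ` ball 0 1 \<subseteq> Y" and f0: "f 0 = v"
      and fne: "\<And>z. z \<in> ball 0 1 \<Longrightarrow> z \<noteq> 0 \<Longrightarrow> f z \<noteq> v"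
      unfolding hurwitz_family_def by auto
    define g where "g = (\<lambda>z. 1 - (f z - v) / (p - v))"
    have holg: "g holomorphic_on ball 0 1" unfolding g_def
      using pv by (intro holomorphic_intros holf) auto
    have gnz: "g z \<noteq> 0" if "z \<in> ball 0 1" for z
    proof
      assume "g z = 0"
      then have "f z = p" using pv by (simp add: g_def field_simps)
      moreover have "f z \<in> Y" using fY that by blast
      ultimately show False using pY by simp
    qed
    obtain \<phi> where hol\<phi>: "\<phi> holomorphic_on ball 0 1" and \<phi>eq: "\<And>z. z \<in> ball 0 1 \<Longrightarrow> g z = \<phi> z ^ 2"
      using contractible_imp_holomorphic_sqrt[OF holg convex_imp_contractible[OF convex_ball] gnz] by blast
    define \<psi> where "\<psi> = (\<lambda>z. \<phi> 0 * \<phi> z)"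
    have g0: "g 0 = 1" using f0 by (simp add: g_def)
    have \<phi>0: "\<phi> 0 ^ 2 = 1" using \<phi>eq[of 0] g0 by simp
    have \<psi>eq: "g z = \<psi> z ^ 2" if "z \<in> ball 0 1" for z
      using \<phi>eq[OF that] \<phi>0 by (simp add: \<psi>_def power_mult_distrib)
    have \<psi>0: "\<psi> 0 = 1" using \<phi>0 by (simp add: \<psi>_def power2_eq_square)
    have hol\<psi>: "\<psi> holomorphic_on ball 0 1" unfolding \<psi>_def by (intro holomorphic_intros hol\<phi>)
    define F where "F = (\<lambda>z. - \<psi> (z / (2 * of_real R0)))"
    have F0: "F 0 = -1" using \<psi>0 by (simp add: F_def)
    have inball: "z / (2 * of_real R0) \<in> ball 0 1" if "norm z \<le> R0" for z :: complex
    proof -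
      have "norm (z / (2 * of_real R0)) = norm z / (2 * R0)" using R0
        by (simp add: norm_divide norm_mult)
      also have "\<dots> < 1" using that R0 by (simp add: field_simps)
      finally show ?thesis by simp
    qed
    have holF: "F holomorphic_on cball 0 R0"
    proof -
      have "(\<lambda>z::complex. z / (2 * of_real R0)) ` cball 0 R0 \<subseteq> ball 0 1" using inball by auto
      then have "\<psi> \<circ> (\<lambda>z::complex. z / (2 * of_real R0)) holomorphic_on cball 0 R0"
        by (intro holomorphic_on_compose_gen[OF _ hol\<psi>]) (auto intro!: holomorphic_intros)
      then show ?thesis unfolding F_def o_def by (intro holomorphic_intros) auto
    qed
    have Fomit: "F z \<noteq> 0 \<and> F z \<noteq> 1" if "norm z \<le> R0" for z :: complex
    proof -
      define u where "u = z / (2 * of_real R0)"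
      have u: "u \<in> ball 0 1" using inball[OF that] u_def by simp
      have "\<psi> u \<noteq> 0" using gnz[OF u] \<psi>eq[OF u] by auto
      moreover have "\<psi> u \<noteq> -1"
      proof
        assume h: "\<psi> u = -1"
        then have "g u = 1" using \<psi>eq[OF u] by simp
        then have "f u = v" using pv by (simp add: g_def field_simps)
        then have "u = 0" using fne u by blast
        then show False using h \<psi>0 by simp
      qed
      ultimately show ?thesis unfolding F_def u_def[symmetric] by (metis minus_equation_iff neg_equal_0_iff_equal)
    qed
    have LF: "norm (deriv F 0) < 1"
      using RL[of F] holF Fomit by (simp add: F0 R0_def)
    define \<psi>' where "\<psi>' = deriv \<psi> 0"
    have d\<psi>: "(\<psi> has_field_derivative \<psi>') (at 0)"
      unfolding \<psi>'_def by (rule hol_deriv_at[OF hol\<psi>]) auto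
    have dF: "(F has_field_derivative (- (\<psi>' * (1 / (2 * of_real R0))))) (at 0)"
    proof -
      have "((\<lambda>z::complex. z / (2 * of_real R0)) has_field_derivative (1 / (2 * of_real R0))) (at 0)"
        using R0 by (auto intro!: derivative_eq_intros)
      from DERIV_chain[OF _ this, of \<psi> \<psi>'] d\<psi>
      have "((\<psi> \<circ> (\<lambda>z::complex. z / (2 * of_real R0))) has_field_derivative (\<psi>' * (1 / (2 * of_real R0)))) (at 0)"
        by simp
      then show ?thesis unfolding F_def o_def by (intro derivative_eq_intros) auto
    qed
    have derF: "deriv F 0 = - (\<psi>' * (1 / (2 * of_real R0)))"
      using DERIV_imp_deriv[OF dF] .
    define f' where "f' = deriv f 0"
    have df: "(f has_field_derivative f') (at 0)"
      unfolding f'_def by (rule hol_deriv_at[OF holf]) auto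
    have dg: "(g has_field_derivative (- (f' / (p - v)))) (at 0)"
      unfolding g_def using df pv by (auto intro!: derivative_eq_intros)
    have dpsi2: "((\<lambda>z. \<psi> z ^ 2) has_field_derivative (2 * \<psi>')) (at 0)"
      using d\<psi> \<psi>0 by (auto intro!: derivative_eq_intros)
    have dg2: "(g has_field_derivative (2 * \<psi>')) (at 0)"
    proof (rule has_field_derivative_transform_within_open[OF dpsi2, of "ball 0 1"])
      show "open (ball (0::complex) 1)" by simp
      show "(0::complex) \<in> ball 0 1" by simp
      show "\<And>x. x \<in> ball 0 1 \<Longrightarrow> \<psi> x ^ 2 = g x" using \<psi>eq by simp
    qed
    have "- (f' / (p - v)) = 2 * \<psi>'" using DERIV_unique[OF dg dg2] .
    then have f'eq: "f' = - 2 * \<psi>' * (p - v)" using pv by (simp add: field_simps)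
    have "norm \<psi>' = 2 * R0 * norm (deriv F 0)" using R0
      by (simp add: derF norm_mult norm_divide)
    also have "\<dots> \<le> 2 * R0" using LF R0 by simp
    finally have "norm \<psi>' \<le> 2 * R0" .
    then have "norm f' \<le> 2 * (2 * R0) * norm (p - v)"
      by (simp add: f'eq norm_mult mult_right_mono)
    then show "norm (deriv f 0) \<le> 4 * norm (p - v) * R0" by (simp add: f'_def algebra_simps)
  qed
qed

definition hset :: "complex set \<Rightarrow> complex \<Rightarrow> real set" where
  "hset Y v = {Re (deriv h 0) | h. h \<in> hurwitz_family (ball 0 1) Y 0 v
                              \<and> Im (deriv h 0) = 0 \<and> Re (deriv h 0) > 0}"

lemma hset_props:
  assumes "domain Y" "Y \<noteq> UNIV" "v \<in> Y"
  shows "hset Y v \<noteq> {}" "bdd_above (hset Y v)" "hurwitz_radius Y v > 0"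
    "hurwitz_radius Y v = Sup (hset Y v)"
proof -
  show rdef: "hurwitz_radius Y v = Sup (hset Y v)" unfolding hurwitz_radius_def hset_def ..
  obtain p where pY: "p \<notin> Y" using assms(2) by auto
  obtain B where B: "\<And>f. f \<in> hurwitz_family (ball 0 1) Y 0 v \<Longrightarrow> norm (deriv f 0) \<le> B"
    using hurwitz_deriv_bound[OF pY assms(3)] by blast
  show bdd: "bdd_above (hset Y v)"
  proof (rule bdd_aboveI)
    fix x assume "x \<in> hset Y v"
    then obtain h where "h \<in> hurwitz_family (ball 0 1) Y 0 v" "x = Re (deriv h 0)"
      unfolding hset_def by auto
    then show "x \<le> B" using B complex_Re_le_cmod order_trans by blast
  qed
  have "open Y" using assms(1) unfolding domain_def by auto
  then obtain e where e: "e > 0" "ball v e \<subseteq> Y" using assms(3) open_contains_ball by blast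
  define h where "h = (\<lambda>z. v + of_real (e/2) * z)"
  have dh: "(h has_field_derivative of_real (e/2)) (at 0)"
    unfolding h_def by (auto intro!: derivative_eq_intros)
  have derh: "deriv h 0 = of_real (e/2)" using DERIV_imp_deriv[OF dh] .
  have "h \<in> hurwitz_family (ball 0 1) Y 0 v"
    unfolding hurwitz_family_def
  proof (intro CollectI conjI ballI)
    show "h holomorphic_on ball 0 1" unfolding h_def by (intro holomorphic_intros)
    show "h ` ball 0 1 \<subseteq> Y"
    proof
      fix y assume "y \<in> h ` ball 0 1"
      then obtain z where z: "norm z < 1" "y = h z" by auto
      have "dist v y = e/2 * norm z" using e z by (simp add: h_def dist_norm norm_mult)
      also have "\<dots> < e" using e z by (simp add: mult_less_cancel_left)
      finally show "y \<in> Y" using e by auto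
    qed
    show "h 0 = v" by (simp add: h_def)
    fix z :: complex assume "z \<in> ball 0 1 - {0}"
    then show "h z \<noteq> v" using e by (auto simp: h_def)
  qed
  moreover have "Re (deriv h 0) = e/2" "Im (deriv h 0) = 0" by (simp_all add: derh)
  ultimately have "h \<in> hurwitz_family (ball 0 1) Y 0 v \<and> Im (deriv h 0) = 0 \<and> Re (deriv h 0) > 0
     \<and> e/2 = Re (deriv h 0)" using e by simp
  then have mem: "e/2 \<in> hset Y v" unfolding hset_def by blast
  then show "hset Y v \<noteq> {}" by auto
  have "e/2 \<le> Sup (hset Y v)" using cSup_upper[OF mem bdd] .
  then show "hurwitz_radius Y v > 0" using rdef e by simp
qed

theorem proposition3p8:
  fixes \<Omega> Y :: "complex set" and s :: complex
  assumes "domain \<Omega>" and "\<Omega> \<noteq> UNIV"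
    and "domain Y" and "Y \<noteq> UNIV"
    and "s \<in> Y"
    and "\<forall>z\<in>\<Omega>. caratheodory_hurwitz \<Omega> Y s z > 0"
  shows "\<forall>w\<in>\<Omega>. hurwitz_density \<Omega> w \<ge> caratheodory_hurwitz \<Omega> Y s w"
proof
  fix w assume w: "w \<in> \<Omega>"
  have oO: "open \<Omega>" using assms(1) unfolding domain_def by auto
  note PO = hset_props[OF assms(1,2) w]
  note PY = hset_props[OF assms(3,4,5)]
  define rO where "rO = hurwitz_radius \<Omega> w"
  define rY where "rY = hurwitz_radius Y s"
  have rO: "rO > 0" and rY: "rY > 0" using PO PY rO_def rY_def by auto
  have key: "hurwitz_density Y (h w) * norm (deriv h w) \<le> 2 / rO"
    if hF: "h \<in> hurwitz_family \<Omega> Y w s" for h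
  proof -
    from hF have holh: "h holomorphic_on \<Omega>" and hY: "h ` \<Omega> \<subseteq> Y" and hw: "h w = s"
      and hne: "\<And>z. z \<in> \<Omega> \<Longrightarrow> z \<noteq> w \<Longrightarrow> h z \<noteq> s"
      unfolding hurwitz_family_def by auto
    define a where "a = deriv h w"
    have "norm a * rO \<le> rY"
    proof (cases "a = 0")
      case True then show ?thesis using rY by simp
    next
      case False
      have na: "norm a > 0" using False by simp
      have "rO \<le> rY / norm a"
        unfolding rO_def PO(4)
      proof (rule cSup_least[OF PO(1)])
        fix x assume "x \<in> hset \<Omega> w"
        then obtain g where gF: "g \<in> hurwitz_family (ball 0 1) \<Omega> 0 w"
          and gim: "Im (deriv g 0) = 0" and x: "x = Re (deriv g 0)" and xpos: "x > 0"
          unfolding hset_def by auto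
        from gF have holg: "g holomorphic_on ball 0 1" and gO: "g ` ball 0 1 \<subseteq> \<Omega>" and g0: "g 0 = w"
          and gne: "\<And>z. z \<in> ball 0 1 \<Longrightarrow> z \<noteq> 0 \<Longrightarrow> g z \<noteq> w"
          unfolding hurwitz_family_def by auto
        have dg0: "deriv g 0 = of_real x" using gim x by (simp add: complex_eq_iff)
        define c where "c = cnj a / of_real (norm a)"
        have nc: "norm c = 1" using na by (simp add: c_def norm_divide)
        have ac: "a * c = of_real (norm a)"
          using na by (simp add: c_def complex_norm_square[symmetric] power2_eq_square field_simps)
        define k where "k = (\<lambda>z. h (g (c * z)))"
        have cz: "c * z \<in> ball 0 1" if "z \<in> ball 0 1" for z
          using that nc by (simp add: norm_mult)
        have kF: "k \<in> hurwitz_family (ball 0 1) Y 0 s"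
          unfolding hurwitz_family_def
        proof (intro CollectI conjI ballI)
          have "(\<lambda>z. c * z) ` ball 0 1 \<subseteq> ball 0 1" using cz by auto
          then have "g \<circ> (\<lambda>z. c * z) holomorphic_on ball 0 1"
            by (intro holomorphic_on_compose_gen[OF _ holg]) (auto intro!: holomorphic_intros)
          moreover have "(g \<circ> (\<lambda>z. c * z)) ` ball 0 1 \<subseteq> \<Omega>" using cz gO by auto
          ultimately have "h \<circ> (g \<circ> (\<lambda>z. c * z)) holomorphic_on ball 0 1"
            by (intro holomorphic_on_compose_gen[OF _ holh])
          then show "k holomorphic_on ball 0 1" by (simp add: k_def o_def)
          show "k ` ball 0 1 \<subseteq> Y" using cz gO hY by (auto simp: k_def image_subset_iff)
          show "k 0 = s" using g0 hw by (simp add: k_def)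
          fix z :: complex assume z: "z \<in> ball 0 1 - {0}"
          then have "c * z \<noteq> 0" using nc by auto
          then have "g (c * z) \<noteq> w" using gne cz z by auto
          moreover have "g (c * z) \<in> \<Omega>" using cz z gO by auto
          ultimately show "k z \<noteq> s" using hne by (simp add: k_def)
        qed
        have dlin: "((\<lambda>z. c * z) has_field_derivative c) (at 0)"
          by (auto intro!: derivative_eq_intros)
        have dg: "(g has_field_derivative deriv g 0) (at (c * 0))"
          using hol_deriv_at[OF holg] by simp
        have dgc: "((g \<circ> (\<lambda>z. c * z)) has_field_derivative deriv g 0 * c) (at 0)"
          using DERIV_chain[OF dg dlin] .
        have dh: "(h has_field_derivative a) (at ((g \<circ> (\<lambda>z. c * z)) 0))"
          using hol_deriv_at[OF holh oO w] g0 by (simp add: a_def)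
        have dk: "(k has_field_derivative a * (deriv g 0 * c)) (at 0)"
          using DERIV_chain[OF dh dgc] by (simp add: k_def o_def)
        have "deriv k 0 = a * (deriv g 0 * c)" using DERIV_imp_deriv[OF dk] .
        also have "\<dots> = of_real (norm a * x)" using ac dg0 by (simp add: algebra_simps)
        finally have dk0: "deriv k 0 = of_real (norm a * x)" .
        have "norm a * x \<in> hset Y s" unfolding hset_def using kF dk0 na xpos
          by (auto intro!: exI[of _ k])
        then have "norm a * x \<le> rY" unfolding rY_def PY(4) using cSup_upper PY(2) by blast
        then show "x \<le> rY / norm a" using na by (simp add: field_simps)
      qed
      then show ?thesis using na by (simp add: field_simps)
    qed
    then show ?thesis
      unfolding hurwitz_density_def hw a_def[symmetric] rY_def[symmetric]
      using rO rY by (simp add: field_simps)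
  qed
  show "hurwitz_density \<Omega> w \<ge> caratheodory_hurwitz \<Omega> Y s w"
  proof (cases "hurwitz_family \<Omega> Y w s = {}")
    case True
    then show ?thesis using rO unfolding caratheodory_hurwitz_def hurwitz_density_def rO_def by simp
  next
    case False
    have "Sup {hurwitz_density Y (h w) * norm (deriv h w) | h. h \<in> hurwitz_family \<Omega> Y w s} \<le> 2 / rO"
      using False key by (intro cSup_least) auto
    then show ?thesis using False unfolding caratheodory_hurwitz_def hurwitz_density_def rO_def by simp
  qed
qed

end
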